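(* Fix any quantile vector $\mathbf{q}=(q_1\ge q_2\ge\dots\ge q_N)$ with $q_i\in(0,1)$. Then $\mathrm{STR}(\mathbf{q},\pi)\ge \mathrm{OPT}(\mathbf{q},\pi)$ for every assignment $\pi\in\mathcal{E}_1$. Moreover, with $\pi$ uniformly random from $\Pi_{n,m,c}$, $\mathbb{E}_\pi[\mathrm{STR}(\mathbf{q},\pi)-\mathrm{OPT}(\mathbf{q},\pi)\mid \mathcal{E}_1]\ge \mathbb{E}_{i,j}[b(q_i)-s(q_j)]$, where $i$ is uniform on $I_1$ and $j$ is uniform on $J_1$, independently.
   Context: Setting: distributions $F_B,F_S$ with quantile functions $b(q)=\inf\{x:\Pr_{b\sim F_B}[b\le x]\ge q\}$, $s(q)=\inf\{x:\Pr_{s\sim F_S}[s\le x]\ge q\}$, and $F_B$ first-order stochastically dominates $F_S$, i.e. $b(q)\ge s(q)$ for all $q\in(0,1)$. Integers $m\ge n\ge 20$ (original buyers, original sellers) and $c\ge1$ (new buyers and new sellers); $N=m+n+2c$. $\Pi_{n,m,c}$ is the set of maps $\pi:[N]\to\{\mathrm{BO},\mathrm{BN},\mathrm{SO},\mathrm{SN}\}$ with $|\pi^{-1}(\mathrm{BO})|=m$, $|\pi^{-1}(\mathrm{SO})|=n$, $|\pi^{-1}(\mathrm{BN})|=|\pi^{-1}(\mathrm{SN})|=c$; write $B_{\mathrm{Old}}^\pi=\pi^{-1}(\mathrm{BO})$, $B_{\mathrm{New}}^\pi=\pi^{-1}(\mathrm{BN})$, $S_{\mathrm{Old}}^\pi=\pi^{-1}(\mathrm{SO})$,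 $S_{\mathrm{New}}^\pi=\pi^{-1}(\mathrm{SN})$. Given $\mathbf{q}$ and $\pi$, index $i$ labeled as a buyer is a buyer with value $b(q_i)$ and index labeled as a seller is a seller with value $s(q_i)$; the original market consists of the old buyers and old sellers, the augmented market of all agents. $\mathrm{OPT}(\mathbf{q},\pi)$ is the first-best gains from trade in the original market and $\mathrm{STR}(\mathbf{q},\pi)$ is the gains from trade of Seller Trade Reduction in the augmented market. (First best: with buyer values $b^{(1)}\ge\dots$ and seller values $s^{(1)}\le\dots$, let $r=\max\{i: b^{(i)}\ge s^{(i)}\}$ over $i\le$ min of the side sizes ($r=0$ if none); trade the top $r$ buyers with bottom $r$ sellers, gains $\sum_{i\le r}(b^{(i)}-s^{(i)})$. STR: with $s^{(k)}=\infty$ beyond the number of sellers, if $b^{(r)}\ge s^{(r+1)}$ trade $r$ pairs, else trade only the top $r-1$ buyers with bottom $r-1$ sellers.) Let $p=\lceil n/10\rceil$, $I_1=\{1,\dots,p\}$, $I_2=\{p+1,\dots,2p\}$, $J_1=\{N-p+1,\dots,N\}$, $J_2=\{N-2p+1,\dots,N-p\}$. $\mathcal{E}_1$ is the set of $\pi\in\Pi_{n,m,c}$ with $|I_1\cap B_{\mathrm{New}}^\pi|\ge2$, $|I_2\cap B_{\mathrm{Old}}^\pi|\ge1$, $|J_1\cap S_{\mathrm{New}}^\pi|\ge2$, and $|J_2\cap S_{\mathrm{Old}}^\pi|\ge1$. *)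

theory Defs
  imports "HOL-Probability.Probability"
begin

definition quantile :: "real measure \<Rightarrow> real \<Rightarrow> real" where
  "quantile M u = Inf {x. u \<le> measure M {..x}}"

datatype role = BO | BN | SO | SN

definition assignments :: "nat \<Rightarrow> nat \<Rightarrow> nat \<Rightarrow> (nat \<Rightarrow> role) set" where
  "assignments n m c =
     {\<pi> \<in> {1..m+n+2*c} \<rightarrow>\<^sub>E (UNIV :: role set).
        card {i \<in> {1..m+n+2*c}. \<pi> i = BO} = m \<and>
        card {i \<in> {1..m+n+2*c}. \<pi> i = SO} = n \<and>
        card {i \<in> {1..m+n+2*c}. \<pi> i = BN} = c \<and>
        card {i \<in> {1..m+n+2*c}. \<pi> i = SN} = c}"

definition agents :: "nat \<Rightarrow> (nat \<Rightarrow> role) \<Rightarrow> role set \<Rightarrow> nat set" where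
  "agents N \<pi> R = {i \<in> {1..N}. \<pi> i \<in> R}"

(* first-best number of trades r, from unsorted buyer values bs and seller values ss;
   buyers sorted decreasingly b^(1) >= b^(2) >= ..., sellers increasingly s^(1) <= ... ;
   list index k-1 holds the k-th order statistic *)
definition fb_count :: "real list \<Rightarrow> real list \<Rightarrow> nat" where
  "fb_count bs ss = (let B = rev (sort bs); S = sort ss in
     Max ({0} \<union> {i. 1 \<le> i \<and> i \<le> min (length B) (length S) \<and> S ! (i-1) \<le> B ! (i-1)}))"

definition gains :: "real list \<Rightarrow> real list \<Rightarrow> nat \<Rightarrow> real" where
  "gains bs ss k = (let B = rev (sort bs); S = sort ss in (\<Sum>i<k. B ! i - S ! i))"

definition first_best :: "real list \<Rightarrow> real list \<Rightarrow> real" where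
  "first_best bs ss = gains bs ss (fb_count bs ss)"

(* Seller Trade Reduction: s^(r+1) = infinity if r+1 exceeds the number of sellers *)
definition str_gains :: "real list \<Rightarrow> real list \<Rightarrow> real" where
  "str_gains bs ss = (let r = fb_count bs ss; B = rev (sort bs); S = sort ss in
     if r = 0 then 0
     else if r < length S \<and> S ! r \<le> B ! (r-1) then gains bs ss r
     else gains bs ss (r-1))"

definition vals :: "(real \<Rightarrow> real) \<Rightarrow> (nat \<Rightarrow> real) \<Rightarrow> nat set \<Rightarrow> real list" where
  "vals v q A = map (\<lambda>i. v (q i)) (sorted_list_of_set A)"

(* OPT(q,pi): first best in the original market (old buyers, old sellers) *)
definition OPT_gft :: "(real \<Rightarrow> real) \<Rightarrow> (real \<Rightarrow> real) \<Rightarrow> nat \<Rightarrow> (nat \<Rightarrow> real) \<Rightarrow> (nat \<Rightarrow> role) \<Rightarrow> real" where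
  "OPT_gft b s N q \<pi> = first_best (vals b q (agents N \<pi> {BO})) (vals s q (agents N \<pi> {SO}))"

definition STR_gft :: "(real \<Rightarrow> real) \<Rightarrow> (real \<Rightarrow> real) \<Rightarrow> nat \<Rightarrow> (nat \<Rightarrow> real) \<Rightarrow> (nat \<Rightarrow> role) \<Rightarrow> real" where
  "STR_gft b s N q \<pi> = str_gains (vals b q (agents N \<pi> {BO, BN})) (vals s q (agents N \<pi> {SO, SN}))"

definition pblk :: "nat \<Rightarrow> nat" where
  "pblk n = nat \<lceil>real n / 10\<rceil>"

definition event_E1 :: "nat \<Rightarrow> nat \<Rightarrow> nat \<Rightarrow> (nat \<Rightarrow> role) set" where
  "event_E1 n m c = (let N = m + n + 2*c; p = pblk n in
     {\<pi> \<in> assignments n m c.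
        2 \<le> card ({1..p} \<inter> agents N \<pi> {BN}) \<and>
        1 \<le> card ({p+1..2*p} \<inter> agents N \<pi> {BO}) \<and>
        2 \<le> card ({N-p+1..N} \<inter> agents N \<pi> {SN}) \<and>
        1 \<le> card ({N-2*p+1..N-p} \<inter> agents N \<pi> {SO})})"

end

theory Submission
  imports Defs
begin

lemma rs_sorted: "sorted_wrt (\<ge>) (rev (sort (xs::real list)))"
  by (simp add: sorted_wrt_rev)

lemma rs_nth_mono: "i \<le> j \<Longrightarrow> j < length xs \<Longrightarrow> rev (sort (xs::real list)) ! j \<le> rev (sort xs) ! i"
  by (simp add: rev_nth sorted_nth_mono)

lemma s_nth_mono: "i \<le> j \<Longrightarrow> j < length xs \<Longrightarrow> sort (xs::real list) ! i \<le> sort xs ! j"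
  by (simp add: sorted_nth_mono)

lemma len_filter_mset: "length (filter P xs) = length (filter P ys)" if "mset xs = mset ys"
  by (metis mset_filter size_mset that)

lemma L1: assumes "k < length (filter (\<lambda>v. t \<le> v) (xs::real list))"
  shows "t \<le> rev (sort xs) ! k"
proof (rule ccontr)
  let ?B = "rev (sort xs)"
  assume "\<not> t \<le> ?B ! k"
  hence lt: "?B ! k < t" by simp
  have kl: "k < length xs" using assms length_filter_le[of _ xs] by (meson order_less_le_trans)
  have "filter (\<lambda>v. t \<le> v) (drop k ?B) = []"
  proof -
    have "\<forall>v\<in>set (drop k ?B). v < t"
    proof
      fix v assume "v \<in> set (drop k ?B)"
      then obtain j where j: "j < length (drop k ?B)" "v = drop k ?B ! j" by (metis in_set_conv_nth)
      hence "v = ?B ! (k + j)" "k + j < length xs" by auto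
      thus "v < t" using rs_nth_mono[of k "k+j" xs] lt by auto
    qed
    thus ?thesis by (simp add: filter_empty_conv) (meson not_le)
  qed
  hence "length (filter (\<lambda>v. t \<le> v) ?B) = length (filter (\<lambda>v. t \<le> v) (take k ?B))"
    by (metis append_Nil2 append_take_drop_id filter_append)
  also have "\<dots> \<le> k" by (metis length_filter_le length_take min.bounded_iff nle_le)
  finally have "length (filter (\<lambda>v. t \<le> v) xs) \<le> k"
    using len_filter_mset[of ?B xs] by simp
  thus False using assms by simp
qed

lemma L1s: assumes "k < length (filter (\<lambda>v. v \<le> t) (xs::real list))"
  shows "sort xs ! k \<le> t"
proof (rule ccontr)
  let ?B = "sort xs"
  assume "\<not> ?B ! k \<le> t"
  hence lt: "t < ?B ! k" by simp
  have kl: "k < length xs" using assms length_filter_le[of _ xs] by (meson order_less_le_trans)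
  have "filter (\<lambda>v. v \<le> t) (drop k ?B) = []"
  proof -
    have "\<forall>v\<in>set (drop k ?B). t < v"
    proof
      fix v assume "v \<in> set (drop k ?B)"
      then obtain j where j: "j < length (drop k ?B)" "v = drop k ?B ! j" by (metis in_set_conv_nth)
      hence "v = ?B ! (k + j)" "k + j < length xs" by auto
      thus "t < v" using s_nth_mono[of k "k+j" xs] lt by auto
    qed
    thus ?thesis by (simp add: filter_empty_conv) (meson not_le)
  qed
  hence "length (filter (\<lambda>v. v \<le> t) ?B) = length (filter (\<lambda>v. v \<le> t) (take k ?B))"
    by (metis append_Nil2 append_take_drop_id filter_append)
  also have "\<dots> \<le> k" by (metis length_filter_le length_take min.bounded_iff nle_le)
  finally have "length (filter (\<lambda>v. v \<le> t) xs) \<le> k"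
    using len_filter_mset[of ?B xs] by simp
  thus False using assms by simp
qed

lemma L2: assumes "1 \<le> k" "k \<le> length (xs::real list)"
  shows "k \<le> length (filter (\<lambda>v. rev (sort xs) ! (k-1) \<le> v) xs)"
proof -
  let ?B = "rev (sort xs)" let ?P = "\<lambda>v. ?B ! (k-1) \<le> v"
  have "filter ?P (take k ?B) = take k ?B"
  proof (rule filter_True, rule ballI)
    fix v assume "v \<in> set (take k ?B)"
    then obtain j where "j < length (take k ?B)" "v = take k ?B ! j" by (metis in_set_conv_nth)
    thus "?P v" using rs_nth_mono[of j "k-1" xs] assms by auto
  qed
  hence "k = length (filter ?P (take k ?B))" using assms by simp
  also have "\<dots> \<le> length (filter ?P ?B)"
    by (metis append_take_drop_id filter_append le_add1 length_append)
  also have "\<dots> = length (filter ?P xs)" using len_filter_mset[of ?B xs] by simp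
  finally show ?thesis .
qed

lemma L2s: assumes "1 \<le> k" "k \<le> length (xs::real list)"
  shows "k \<le> length (filter (\<lambda>v. v \<le> sort xs ! (k-1)) xs)"
proof -
  let ?B = "sort xs" let ?P = "\<lambda>v. v \<le> ?B ! (k-1)"
  have "filter ?P (take k ?B) = take k ?B"
  proof (rule filter_True, rule ballI)
    fix v assume "v \<in> set (take k ?B)"
    then obtain j where "j < length (take k ?B)" "v = take k ?B ! j" by (metis in_set_conv_nth)
    thus "?P v" using s_nth_mono[of j "k-1" xs] assms by auto
  qed
  hence "k = length (filter ?P (take k ?B))" using assms by simp
  also have "\<dots> \<le> length (filter ?P ?B)"
    by (metis append_take_drop_id filter_append le_add1 length_append)
  also have "\<dots> = length (filter ?P xs)" using len_filter_mset[of ?B xs] by simp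
  finally show ?thesis .
qed

lemma topk: "sorted_wrt (\<ge>) (L::real list) \<Longrightarrow> A \<subseteq># mset L \<Longrightarrow> sum_mset A \<le> sum_list (take (size A) L)"
proof (induction L arbitrary: A)
  case Nil thus ?case by simp
next
  case (Cons a L)
  show ?case
  proof (cases "A = {#}")
    case True thus ?thesis by simp
  next
    case False
    define z where "z = (if a \<in># A then a else (SOME z. z \<in># A))"
    have zA: "z \<in># A" using False unfolding z_def by (metis multiset_nonemptyE someI_ex)
    have sub: "A - {#z#} \<subseteq># mset L"
    proof (cases "a \<in># A")
      case True
      then show ?thesis using Cons.prems(2) z_def
        by (simp add: subset_eq_diff_conv add.commute)
    next
      case False
      hence "A \<subseteq># mset L" using Cons.prems(2)
        by (metis mset.simps(2) Diff_eq_empty_iff_mset minus_add_mset_if_not_in_lhs)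
      thus ?thesis by (meson diff_subset_eq_self subset_mset.order_trans)
    qed
    have za: "z \<le> a"
    proof -
      have "z \<in> set (a # L)" using zA Cons.prems(2) by (metis mset_subset_eqD set_mset_mset)
      thus ?thesis using Cons.prems(1) by auto
    qed
    have IH: "sum_mset (A - {#z#}) \<le> sum_list (take (size (A - {#z#})) L)"
      using Cons.IH Cons.prems(1) sub by simp
    have "sum_mset A = z + sum_mset (A - {#z#})" using sum_mset.remove[OF zA] by simp
    moreover have "size A = Suc (size (A - {#z#}))" using size_Diff1_less[OF zA] size_Diff_singleton[OF zA] by simp
    ultimately show ?thesis using IH za by simp
  qed
qed


lemma summ_neg: "sum_mset (image_mset uminus (A::real multiset)) = - sum_mset A"
  by (induction A) auto

lemma suml_neg: "sum_list (map uminus (xs::real list)) = - sum_list xs"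
  by (induction xs) auto

lemma botk: "sorted (L::real list) \<Longrightarrow> A \<subseteq># mset L \<Longrightarrow> sum_list (take (size A) L) \<le> sum_mset A"
proof -
  assume a: "sorted L" "A \<subseteq># mset L"
  have "sorted_wrt (\<ge>) (map uminus L)" using a(1) by (simp add: sorted_wrt_map sorted_wrt_iff_nth_less)
  moreover have "image_mset uminus A \<subseteq># mset (map uminus L)" using a(2) by (simp add: image_mset_subseteq_mono)
  ultimately have "sum_mset (image_mset uminus A) \<le> sum_list (take (size (image_mset uminus A)) (map uminus L))"
    by (rule topk)
  thus ?thesis by (simp add: take_map summ_neg suml_neg)
qed


lemma fb_set_fin: "finite ({0} \<union> {i. 1 \<le> i \<and> i \<le> min (length B) (length S) \<and> S ! (i-1) \<le> (B::real list) ! (i-1)})"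
  by (rule finite_UnI) (auto intro: finite_subset[of _ "{..min (length B) (length S)}"])

lemma FB1: "fb_count bs ss \<le> length bs \<and> fb_count bs ss \<le> length ss"
proof -
  let ?B = "rev (sort bs)" let ?S = "sort ss"
  let ?X = "{0} \<union> {i. 1 \<le> i \<and> i \<le> min (length ?B) (length ?S) \<and> ?S ! (i-1) \<le> ?B ! (i-1)}"
  have "Max ?X \<in> ?X" using fb_set_fin by (intro Max_in) auto
  hence "Max ?X \<le> min (length bs) (length ss)" by auto
  thus ?thesis unfolding fb_count_def Let_def by simp
qed

lemma FB2: assumes "1 \<le> k" "k \<le> length bs" "k \<le> length ss"
    "sort ss ! (k-1) \<le> rev (sort bs) ! (k-1)"
  shows "k \<le> fb_count bs ss"
proof -
  let ?B = "rev (sort bs)" let ?S = "sort ss"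
  let ?X = "{0} \<union> {i. 1 \<le> i \<and> i \<le> min (length ?B) (length ?S) \<and> ?S ! (i-1) \<le> ?B ! (i-1)}"
  have "k \<in> ?X" using assms by auto
  hence "k \<le> Max ?X" using fb_set_fin by (intro Max_ge) auto
  thus ?thesis unfolding fb_count_def Let_def by simp
qed

lemma FB3: assumes "1 \<le> fb_count bs ss"
  shows "sort ss ! (fb_count bs ss - 1) \<le> rev (sort bs) ! (fb_count bs ss - 1)"
proof -
  let ?B = "rev (sort bs)" let ?S = "sort ss"
  let ?X = "{0} \<union> {i. 1 \<le> i \<and> i \<le> min (length ?B) (length ?S) \<and> ?S ! (i-1) \<le> ?B ! (i-1)}"
  have "Max ?X \<in> ?X" using fb_set_fin by (intro Max_in) auto
  moreover have "Max ?X \<noteq> 0" using assms unfolding fb_count_def Let_def by simp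
  ultimately show ?thesis unfolding fb_count_def Let_def by auto
qed

lemma gains_take: assumes "k \<le> length bs" "k \<le> length ss"
  shows "gains bs ss k = sum_list (take k (rev (sort bs))) - sum_list (take k (sort ss))"
proof -
  have a: "sum_list (take k xs) = (\<Sum>i<k. xs ! i)" if "k \<le> length xs" for xs :: "real list"
    using that by (simp add: sum_list_sum_nth lessThan_atLeast0 min_absorb1)
  show ?thesis unfolding gains_def Let_def using assms a[of "rev (sort bs)"] a[of "sort ss"]
    by (simp add: sum_subtractf)
qed

lemma gains_term_nonneg: assumes "i < fb_count bs ss"
  shows "0 \<le> rev (sort bs) ! i - sort ss ! i"
proof -
  let ?r = "fb_count bs ss"
  have r: "?r \<le> length bs" "?r \<le> length ss" using FB1 by auto
  have "sort ss ! i \<le> sort ss ! (?r - 1)" using r assms by (intro s_nth_mono) auto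
  also have "\<dots> \<le> rev (sort bs) ! (?r - 1)" using assms by (intro FB3) auto
  also have "\<dots> \<le> rev (sort bs) ! i" using r assms by (intro rs_nth_mono) auto
  finally show ?thesis by simp
qed

lemma gains_term_le: "i < fb_count bs ss \<Longrightarrow> sort ss ! i \<le> rev (sort bs) ! i"
  using gains_term_nonneg[of i bs ss] by simp

lemma gains_mono: assumes "k \<le> k'" "k' \<le> fb_count bs ss"
  shows "gains bs ss k \<le> gains bs ss k'"
proof -
  have "(\<Sum>i<k. rev (sort bs) ! i - sort ss ! i) \<le> (\<Sum>i<k'. rev (sort bs) ! i - sort ss ! i)"
    using assms by (intro sum_mono2) (auto intro!: gains_term_le)
  thus ?thesis unfolding gains_def Let_def by simp
qed

lemma str_ge: assumes "1 \<le> fb_count bs ss" "k \<le> fb_count bs ss - 1"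
  shows "gains bs ss k \<le> str_gains bs ss"
proof -
  have "gains bs ss k \<le> gains bs ss (fb_count bs ss - 1)" using assms by (intro gains_mono) auto
  also have "\<dots> \<le> gains bs ss (fb_count bs ss)" by (intro gains_mono) auto
  have h2: "gains bs ss (fb_count bs ss - 1) \<le> gains bs ss (fb_count bs ss)" by (intro gains_mono) auto
  have h1: "gains bs ss k \<le> gains bs ss (fb_count bs ss - 1)" using assms by (intro gains_mono) auto
  show ?thesis using assms h1 h2 unfolding str_gains_def Let_def by auto
qed

lemma vals_len: "finite A \<Longrightarrow> length (vals v q A) = card A"
  by (simp add: vals_def)

lemma vals_mset: "mset (vals v q A) = image_mset (\<lambda>i. v (q i)) (mset_set A)"
  by (simp add: vals_def) (metis mset_sorted_list_of_multiset sorted_list_of_mset_set)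

lemma vals_filter: assumes "finite A"
  shows "length (filter P (vals v q A)) = card {i\<in>A. P (v (q i))}"
proof -
  have "length (filter P (vals v q A)) = length (filter (\<lambda>i. P (v (q i))) (sorted_list_of_set A))"
    by (simp add: vals_def filter_map comp_def)
  also have "\<dots> = card (set (filter (\<lambda>i. P (v (q i))) (sorted_list_of_set A)))"
    by (metis distinct_card distinct_filter distinct_sorted_list_of_set)
  also have "\<dots> = card {i\<in>A. P (v (q i))}" using assms by (simp add: Collect_conj_eq Int_commute set_filter)
  finally show ?thesis .
qed


lemma two_elems: assumes "2 \<le> card X"
  obtains a b where "a \<in> X" "b \<in> X" "a < (b::nat)"
proof -
  have fin: "finite X" using assms by (metis card.infinite not_numeral_le_zero)
  obtain a where a: "a \<in> X" using assms by fastforce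
  have "card (X - {a}) \<ge> 1" using assms a fin by (simp add: card_Diff_singleton)
  then obtain b where b: "b \<in> X - {a}" by (metis all_not_in_conv card.empty not_one_le_zero)
  show ?thesis
  proof (cases "a < b")
    case True thus ?thesis using that a b by auto
  next
    case False hence "b < a" using b by auto
    thus ?thesis using that a b by auto
  qed
qed

lemma pblk_bounds: "real n / 10 \<le> real (pblk n) \<and> real (pblk n) < real n / 10 + 1"
proof -
  have "0 \<le> \<lceil>real n / 10\<rceil>" by simp
  hence e: "real (pblk n) = of_int \<lceil>real n / 10\<rceil>" unfolding pblk_def by simp
  show ?thesis unfolding e using ceiling_correct[of "real n / 10"] by linarith
qed

lemma card_agents_split: "finite A \<Longrightarrow> finite B \<Longrightarrow> A \<inter> B = {} \<Longrightarrow>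
   card {k \<in> A \<union> B. P k} = card {k \<in> A. P k} + card {k \<in> B. P k}"
proof -
  assume "finite A" "finite B" "A \<inter> B = {}"
  moreover have "{k \<in> A \<union> B. P k} = {k \<in> A. P k} \<union> {k \<in> B. P k}" by auto
  ultimately show ?thesis by (simp add: card_Un_disjoint disjoint_iff)
qed


lemma partA:
  fixes b s :: "real \<Rightarrow> real" and q :: "nat \<Rightarrow> real"
  assumes N: "N = m + n + 2*c" and p: "p = pblk n"
    and n20: "20 \<le> n" and nm: "n \<le> m"
    and monb: "\<And>i j. 1 \<le> i \<Longrightarrow> i \<le> j \<Longrightarrow> j \<le> N \<Longrightarrow> b (q j) \<le> b (q i)"
    and mons: "\<And>i j. 1 \<le> i \<Longrightarrow> i \<le> j \<Longrightarrow> j \<le> N \<Longrightarrow> s (q j) \<le> s (q i)"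
    and dom: "\<And>i. 1 \<le> i \<Longrightarrow> i \<le> N \<Longrightarrow> s (q i) \<le> b (q i)"
    and pi: "\<pi> \<in> event_E1 n m c"
    and i: "i \<in> {1..p}" "\<pi> i = BN" and j: "j \<in> {N-p+1..N}" "\<pi> j = SN"
  shows "b (q i) - s (q j) \<le> STR_gft b s N q \<pi> - OPT_gft b s N q \<pi>"
proof -
  have pb: "real n / 10 \<le> real p" "real p < real n / 10 + 1" using pblk_bounds[of n] p by auto
  have p2: "2 \<le> p" using pb n20 by linarith
  have pn: "2 * p \<le> n + 2" using pb n20 by linarith
  have pm: "2 * p \<le> m + 2" using pn nm by linarith
  have pN: "2 * p \<le> N" using N pn n20 nm by linarith
  define BOs where "BOs = agents N \<pi> {BO}"
  define BNs where "BNs = agents N \<pi> {BN}"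
  define SOs where "SOs = agents N \<pi> {SO}"
  define SNs where "SNs = agents N \<pi> {SN}"
  define BA where "BA = agents N \<pi> {BO, BN}"
  define SA where "SA = agents N \<pi> {SO, SN}"
  have asg: "\<pi> \<in> assignments n m c" using pi unfolding event_E1_def Let_def by auto
  have E: "2 \<le> card ({1..p} \<inter> BNs)" "2 \<le> card ({N-p+1..N} \<inter> SNs)"
    using pi unfolding event_E1_def Let_def BNs_def SNs_def N p by auto
  have sub: "BOs \<subseteq> {1..N}" "BNs \<subseteq> {1..N}" "SOs \<subseteq> {1..N}" "SNs \<subseteq> {1..N}"
    unfolding BOs_def BNs_def SOs_def SNs_def agents_def by auto
  have fin: "finite BOs" "finite BNs" "finite SOs" "finite SNs"
    using sub by (auto intro: finite_subset)
  have BAe: "BA = BOs \<union> BNs" and SAe: "SA = SOs \<union> SNs"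
    unfolding BA_def BOs_def BNs_def SA_def SOs_def SNs_def agents_def by auto
  have disj: "BOs \<inter> BNs = {}" "SOs \<inter> SNs = {}"
    unfolding BOs_def BNs_def SOs_def SNs_def agents_def by auto
  have cards: "card BOs = m" "card SOs = n" "card BNs = c" "card SNs = c"
    using asg unfolding assignments_def BOs_def BNs_def SOs_def SNs_def agents_def N by auto
  have cardA: "card BA = m + c" "card SA = n + c"
    using cards disj fin unfolding BAe SAe by (auto simp: card_Un_disjoint)
  have finA: "finite BA" "finite SA" using fin BAe SAe by auto
  have c2: "2 \<le> c"
  proof -
    have "card ({1..p} \<inter> BNs) \<le> card BNs" using fin by (intro card_mono) auto
    thus ?thesis using E cards by linarith
  qed
  obtain i1 i2 where ii: "i1 \<in> {1..p} \<inter> BNs" "i2 \<in> {1..p} \<inter> BNs" "i1 < i2" using two_elems[OF E(1)] by blast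
  obtain j1 j2 where jj: "j1 \<in> {N-p+1..N} \<inter> SNs" "j2 \<in> {N-p+1..N} \<inter> SNs" "j1 < j2" using two_elems[OF E(2)] by blast
  define x2 where "x2 = b (q i2)"
  define y2 where "y2 = s (q j1)"
  have x2le: "x2 \<le> b (q i1)" unfolding x2_def using ii pN by (intro monb) auto
  have y2ge: "s (q j2) \<le> y2" unfolding y2_def using jj pN by (intro mons) auto
  have y2x2: "y2 \<le> x2"
  proof -
    have "s (q j1) \<le> s (q i2)" using ii jj pN by (intro mons) auto
    also have "\<dots> \<le> b (q i2)" using ii pN by (intro dom) auto
    finally show ?thesis unfolding x2_def y2_def .
  qed
  have BNc: "2 \<le> card {k \<in> BNs. t \<le> b (q k)}" if "t \<le> x2" for t
  proof -
    have "{i1, i2} \<subseteq> {k \<in> BNs. t \<le> b (q k)}" using ii that x2le unfolding x2_def by auto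
    hence "card {i1, i2} \<le> card {k \<in> BNs. t \<le> b (q k)}" using fin by (intro card_mono) auto
    thus ?thesis using ii by simp
  qed
  have SNc: "2 \<le> card {k \<in> SNs. s (q k) \<le> t}" if "y2 \<le> t" for t
  proof -
    have "{j1, j2} \<subseteq> {k \<in> SNs. s (q k) \<le> t}" using jj that y2ge unfolding y2_def by auto
    hence "card {j1, j2} \<le> card {k \<in> SNs. s (q k) \<le> t}" using fin by (intro card_mono) auto
    thus ?thesis using jj by simp
  qed
  have BAc: "card {k \<in> BA. P k} = card {k \<in> BOs. P k} + card {k \<in> BNs. P k}" for P
    unfolding BAe using card_agents_split[OF fin(1) fin(2) disj(1)] by simp
  have SAc: "card {k \<in> SA. P k} = card {k \<in> SOs. P k} + card {k \<in> SNs. P k}" for P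
    unfolding SAe using card_agents_split[OF fin(3) fin(4) disj(2)] by simp
  define bs where "bs = vals b q BOs"
  define ss where "ss = vals s q SOs"
  define bs' where "bs' = vals b q BA"
  define ss' where "ss' = vals s q SA"
  have lens: "length bs = m" "length ss = n" "length bs' = m + c" "length ss' = n + c"
    unfolding bs_def ss_def bs'_def ss'_def using fin finA cards cardA by (auto simp: vals_len)
  define r where "r = fb_count bs ss"
  define r' where "r' = fb_count bs' ss'"
  have rle: "r \<le> m" "r \<le> n" using FB1[of bs ss] lens unfolding r_def by auto
  have thr: "\<exists>t. r + 2 \<le> card {k \<in> BA. t \<le> b (q k)} \<and> r + 2 \<le> card {k \<in> SA. s (q k) \<le> t}"
  proof (cases "r = 0")
    case True
    show ?thesis
      by (rule exI[of _ x2]) (use True BNc[of x2] SNc[of x2] y2x2 BAc SAc in auto)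
  next
    case False
    define \<beta> where "\<beta> = rev (sort bs) ! (r - 1)"
    define \<sigma> where "\<sigma> = sort ss ! (r - 1)"
    have r1: "1 \<le> r" using False by simp
    have sb: "\<sigma> \<le> \<beta>" unfolding \<sigma>_def \<beta>_def r_def using FB3[of bs ss] r1 unfolding r_def by simp
    have cb: "r \<le> card {k \<in> BOs. \<beta> \<le> b (q k)}"
      using L2[OF r1, of bs] lens rle fin unfolding \<beta>_def bs_def by (simp add: vals_filter)
    have cs: "r \<le> card {k \<in> SOs. s (q k) \<le> \<sigma>}"
      using L2s[OF r1, of ss] lens rle fin unfolding \<sigma>_def ss_def by (simp add: vals_filter)
    consider "\<beta> > x2" | "\<beta> < y2" | "y2 \<le> \<beta> \<and> \<beta> \<le> x2" by linarith
    then show ?thesis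
    proof cases
      case 1
      have "{k \<in> BOs. \<beta> \<le> b (q k)} \<subseteq> {1..p-1}"
      proof
        fix k assume k: "k \<in> {k \<in> BOs. \<beta> \<le> b (q k)}"
        have "k < i2"
        proof (rule ccontr)
          assume "\<not> k < i2"
          hence "b (q k) \<le> b (q i2)" using ii sub k by (intro monb) auto
          thus False using k 1 unfolding x2_def by auto
        qed
        thus "k \<in> {1..p-1}" using k sub ii by auto
      qed
      hence "card {k \<in> BOs. \<beta> \<le> b (q k)} \<le> p - 1" by (metis card_atLeastAtMost card_mono diff_Suc_1 finite_atLeastAtMost)
      hence rp: "r \<le> p - 1" using cb by linarith
      have "SOs = {k \<in> SOs. p \<le> k} \<union> {k \<in> SOs. k < p}" by auto
      hence "n \<le> card {k \<in> SOs. p \<le> k} + card {k \<in> SOs. k < p}" using cards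
        by (metis card_Un_le)
      moreover have "card {k \<in> SOs. k < p} \<le> p - 1"
      proof -
        have "{k \<in> SOs. k < p} \<subseteq> {1..p-1}" using sub by auto
        thus ?thesis by (metis card_atLeastAtMost card_mono diff_Suc_1 finite_atLeastAtMost)
      qed
      moreover have "{k \<in> SOs. p \<le> k} \<subseteq> {k \<in> SOs. s (q k) \<le> x2}"
      proof
        fix k assume k: "k \<in> {k \<in> SOs. p \<le> k}"
        have "s (q k) \<le> s (q p)" using k sub p2 by (intro mons) auto
        also have "\<dots> \<le> b (q p)" using p2 pN by (intro dom) auto
        also have "\<dots> \<le> b (q i2)" using ii pN by (intro monb) auto
        finally show "k \<in> {k \<in> SOs. s (q k) \<le> x2}" using k unfolding x2_def by auto
      qed
      hence "card {k \<in> SOs. p \<le> k} \<le> card {k \<in> SOs. s (q k) \<le> x2}" using fin by (intro card_mono) auto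
      ultimately have "r \<le> card {k \<in> SOs. s (q k) \<le> x2}" using rp pn by linarith
      moreover have "r \<le> card {k \<in> BOs. x2 \<le> b (q k)}"
      proof -
        have "{k \<in> BOs. \<beta> \<le> b (q k)} \<subseteq> {k \<in> BOs. x2 \<le> b (q k)}" using 1 by auto
        hence "card {k \<in> BOs. \<beta> \<le> b (q k)} \<le> card {k \<in> BOs. x2 \<le> b (q k)}" using fin by (intro card_mono) auto
        thus ?thesis using cb by linarith
      qed
      ultimately show ?thesis using BNc[of x2] SNc[of x2] y2x2 BAc SAc by (intro exI[of _ x2]) auto
    next
      case 2
      have "{k \<in> SOs. s (q k) \<le> \<sigma>} \<subseteq> {N-p+2..N}"
      proof
        fix k assume k: "k \<in> {k \<in> SOs. s (q k) \<le> \<sigma>}"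
        have "j1 < k"
        proof (rule ccontr)
          assume "\<not> j1 < k"
          hence "s (q j1) \<le> s (q k)" using jj sub k by (intro mons) auto
          thus False using k 2 sb unfolding y2_def by auto
        qed
        thus "k \<in> {N-p+2..N}" using k sub jj by auto
      qed
      moreover have "card {N-p+2..N} = p - 1" using pN p2 by simp
      ultimately have "card {k \<in> SOs. s (q k) \<le> \<sigma>} \<le> p - 1" by (metis card_mono finite_atLeastAtMost)
      hence rp: "r \<le> p - 1" using cs by linarith
      have "BOs = {k \<in> BOs. k \<le> N-p+1} \<union> {k \<in> BOs. N-p+1 < k}" by auto
      hence "m \<le> card {k \<in> BOs. k \<le> N-p+1} + card {k \<in> BOs. N-p+1 < k}" using cards
        by (metis card_Un_le)
      moreover have "card {k \<in> BOs. N-p+1 < k} \<le> p - 1"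
      proof -
        have "{k \<in> BOs. N-p+1 < k} \<subseteq> {N-p+2..N}" using sub by auto
        moreover have "card {N-p+2..N} = p - 1" using pN p2 by simp
        ultimately show ?thesis by (metis card_mono finite_atLeastAtMost)
      qed
      moreover have "{k \<in> BOs. k \<le> N-p+1} \<subseteq> {k \<in> BOs. y2 \<le> b (q k)}"
      proof
        fix k assume k: "k \<in> {k \<in> BOs. k \<le> N-p+1}"
        have "s (q j1) \<le> s (q (N-p+1))" using jj pN by (intro mons) auto
        also have "\<dots> \<le> b (q (N-p+1))" using pN p2 by (intro dom) auto
        also have "\<dots> \<le> b (q k)" using k sub pN p2 by (intro monb) auto
        finally show "k \<in> {k \<in> BOs. y2 \<le> b (q k)}" using k unfolding y2_def by auto
      qed
      hence "card {k \<in> BOs. k \<le> N-p+1} \<le> card {k \<in> BOs. y2 \<le> b (q k)}" using fin by (intro card_mono) auto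
      ultimately have "r \<le> card {k \<in> BOs. y2 \<le> b (q k)}" using rp pm by linarith
      moreover have "r \<le> card {k \<in> SOs. s (q k) \<le> y2}"
      proof -
        have "{k \<in> SOs. s (q k) \<le> \<sigma>} \<subseteq> {k \<in> SOs. s (q k) \<le> y2}" using 2 sb by auto
        hence "card {k \<in> SOs. s (q k) \<le> \<sigma>} \<le> card {k \<in> SOs. s (q k) \<le> y2}" using fin by (intro card_mono) auto
        thus ?thesis using cs by linarith
      qed
      ultimately show ?thesis using BNc[of y2] SNc[of y2] y2x2 BAc SAc by (intro exI[of _ y2]) auto
    next
      case 3
      have "r \<le> card {k \<in> SOs. s (q k) \<le> \<beta>}"
      proof -
        have "{k \<in> SOs. s (q k) \<le> \<sigma>} \<subseteq> {k \<in> SOs. s (q k) \<le> \<beta>}" using sb by auto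
        hence "card {k \<in> SOs. s (q k) \<le> \<sigma>} \<le> card {k \<in> SOs. s (q k) \<le> \<beta>}" using fin by (intro card_mono) auto
        thus ?thesis using cs by linarith
      qed
      thus ?thesis using cb BNc[of \<beta>] SNc[of \<beta>] 3 BAc SAc by (intro exI[of _ \<beta>]) auto
    qed
  qed
  then obtain t where t: "r + 2 \<le> card {k \<in> BA. t \<le> b (q k)}" "r + 2 \<le> card {k \<in> SA. s (q k) \<le> t}" by blast
  have "t \<le> rev (sort bs') ! (r + 1)"
    using t(1) finA by (intro L1) (simp add: bs'_def vals_filter)
  moreover have "sort ss' ! (r + 1) \<le> t"
    using t(2) finA by (intro L1s) (simp add: ss'_def vals_filter)
  ultimately have rr: "r + 2 \<le> r'" unfolding r'_def using lens rle c2
    by (intro FB2) auto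
  have OPT: "OPT_gft b s N q \<pi> = gains bs ss r"
    unfolding OPT_gft_def first_best_def r_def bs_def ss_def BOs_def SOs_def by simp
  have STR: "STR_gft b s N q \<pi> = str_gains bs' ss'"
    unfolding STR_gft_def bs'_def ss'_def BA_def SA_def by simp
  have g1: "gains bs' ss' (r+1) \<le> str_gains bs' ss'" using rr unfolding r'_def by (intro str_ge) auto
  have g2: "gains bs' ss' (r+1) = sum_list (take (r+1) (rev (sort bs'))) - sum_list (take (r+1) (sort ss'))"
    using lens rle c2 by (intro gains_take) auto
  have g3: "gains bs ss r = sum_list (take r (rev (sort bs))) - sum_list (take r (sort ss))"
    using lens rle by (intro gains_take) auto
  have mtake: "mset (take k L) \<subseteq># mset L" for k and L :: "real list"
    by (metis append_take_drop_id mset_append mset_subset_eq_add_left)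
  have iBN: "i \<in> BNs" using i pN unfolding BNs_def agents_def by auto
  have jSN: "j \<in> SNs" using j pN unfolding SNs_def agents_def by auto
  define A where "A = mset (take r (rev (sort bs))) + {#b (q i)#}"
  have e1: "mset bs' = image_mset (\<lambda>k. b (q k)) (mset_set BOs) + image_mset (\<lambda>k. b (q k)) (mset_set BNs)"
    unfolding bs'_def vals_mset BAe using fin disj by (simp add: mset_set_Union)
  have s1: "mset (take r (rev (sort bs))) \<subseteq># image_mset (\<lambda>k. b (q k)) (mset_set BOs)"
    using mtake[of r "rev (sort bs)"] unfolding bs_def by (simp add: vals_mset)
  have s2: "{#b (q i)#} \<subseteq># image_mset (\<lambda>k. b (q k)) (mset_set BNs)" using iBN fin by simp
  have "A \<subseteq># mset (rev (sort bs'))" unfolding A_def using subset_mset.add_mono[OF s1 s2] e1 by simp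
  from topk[OF rs_sorted this] have T: "sum_mset A \<le> sum_list (take (size A) (rev (sort bs')))" .
  have sA: "size A = r + 1" "sum_mset A = sum_list (take r (rev (sort bs))) + b (q i)"
    unfolding A_def using lens rle by (auto simp: sum_mset_sum_list)
  define Bm where "Bm = mset (take r (sort ss)) + {#s (q j)#}"
  have e2: "mset ss' = image_mset (\<lambda>k. s (q k)) (mset_set SOs) + image_mset (\<lambda>k. s (q k)) (mset_set SNs)"
    unfolding ss'_def vals_mset SAe using fin disj by (simp add: mset_set_Union)
  have s3: "mset (take r (sort ss)) \<subseteq># image_mset (\<lambda>k. s (q k)) (mset_set SOs)"
    using mtake[of r "sort ss"] unfolding ss_def by (simp add: vals_mset)
  have s4: "{#s (q j)#} \<subseteq># image_mset (\<lambda>k. s (q k)) (mset_set SNs)" using jSN fin by simp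
  have "Bm \<subseteq># mset (sort ss')" unfolding Bm_def using subset_mset.add_mono[OF s3 s4] e2 by simp
  from botk[OF sorted_sort this] have T2: "sum_list (take (size Bm) (sort ss')) \<le> sum_mset Bm" .
  have sB: "size Bm = r + 1" "sum_mset Bm = sum_list (take r (sort ss)) + s (q j)"
    unfolding Bm_def using lens rle by (auto simp: sum_mset_sum_list)
  show ?thesis using OPT STR g1 g2 g3 T T2 sA sB by simp
qed


definition sw :: "nat \<Rightarrow> nat \<Rightarrow> nat \<Rightarrow> nat" where
  "sw a a' k = (if k = a then a' else if k = a' then a else k)"

lemma sw_sw[simp]: "sw a a' (sw a a' k) = k" by (simp add: sw_def)

lemma inj_sw: "inj (sw a a')" by (metis injI sw_sw)

lemma card_sw: assumes "a \<in> Y \<longleftrightarrow> a' \<in> Y"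
  shows "card {k \<in> Y. P (sw a a' k)} = card {k \<in> Y. P k}"
proof -
  have maps: "sw a a' k \<in> Y" if "k \<in> Y" for k
  proof (cases "k = a")
    case True thus ?thesis using assms that by (simp add: sw_def)
  next
    case False
    show ?thesis
    proof (cases "k = a'")
      case True thus ?thesis using assms that False by (simp add: sw_def)
    next
      case False2: False
      thus ?thesis using that False by (simp add: sw_def)
    qed
  qed
  have "bij_betw (sw a a') {k \<in> Y. P (sw a a' k)} {k \<in> Y. P k}"
    by (rule bij_betw_byWitness[where f'="sw a a'"]) (auto simp: maps)
  thus ?thesis by (rule bij_betw_same_card)
qed

lemma sym_weight:
  fixes E :: "(nat \<Rightarrow> role) set" and X :: "nat set"
  assumes finE: "finite E" and finX: "finite X" and Xne: "X \<noteq> {}"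
    and inv: "\<And>\<pi> a a'. \<pi> \<in> E \<Longrightarrow> a \<in> X \<Longrightarrow> a' \<in> X \<Longrightarrow> \<pi> \<circ> sw a a' \<in> E"
    and kpos: "\<And>\<pi>. \<pi> \<in> E \<Longrightarrow> 0 < card {x \<in> X. \<pi> x = R}"
    and a: "a \<in> X"
  shows "(\<Sum>\<pi>\<in>E. if \<pi> a = R then 1 / real (card {x \<in> X. \<pi> x = R}) else 0) = real (card E) / real (card X)"
proof -
  define W where "W a = (\<Sum>\<pi>\<in>E. if \<pi> a = R then 1 / real (card {x \<in> X. \<pi> x = R}) else 0)" for a
  have Weq: "W a1 = W a2" if a12: "a1 \<in> X" "a2 \<in> X" for a1 a2
  proof -
    define \<phi> where "\<phi> \<pi> = \<pi> \<circ> sw a1 a2" for \<pi> :: "nat \<Rightarrow> role"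
    have kinv: "card {x \<in> X. (\<phi> \<pi>) x = R} = card {x \<in> X. \<pi> x = R}" for \<pi>
      unfolding \<phi>_def using card_sw[of a1 X a2 "\<lambda>k. \<pi> k = R"] a12 by simp
    have "W a1 = (\<Sum>\<pi>\<in>E. if (\<phi> \<pi>) a1 = R then 1 / real (card {x \<in> X. (\<phi> \<pi>) x = R}) else 0)"
      unfolding W_def
      by (rule sum.reindex_bij_witness[of _ \<phi> \<phi>]) (use inv a12 in \<open>auto simp: \<phi>_def fun_eq_iff\<close>)
    also have "\<dots> = W a2" unfolding W_def kinv by (simp add: \<phi>_def sw_def)
    finally show ?thesis .
  qed
  have "(\<Sum>a\<in>X. W a) = (\<Sum>\<pi>\<in>E. \<Sum>a\<in>X. if \<pi> a = R then 1 / real (card {x \<in> X. \<pi> x = R}) else 0)"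
    unfolding W_def by (rule sum.swap)
  also have "\<dots> = (\<Sum>\<pi>\<in>E. 1)"
  proof (rule sum.cong[OF refl])
    fix \<pi> assume "\<pi> \<in> E"
    hence k: "0 < card {x \<in> X. \<pi> x = R}" by (rule kpos)
    have "(\<Sum>a\<in>X. if \<pi> a = R then 1 / real (card {x \<in> X. \<pi> x = R}) else 0)
        = (\<Sum>a\<in>{x \<in> X. \<pi> x = R}. 1 / real (card {x \<in> X. \<pi> x = R}))"
      using sum.inter_filter[OF finX, of "\<lambda>a. 1 / real (card {x \<in> X. \<pi> x = R})" "\<lambda>x. \<pi> x = R"] by simp
    also have "\<dots> = 1" using k by simp
    finally show "(\<Sum>a\<in>X. if \<pi> a = R then 1 / real (card {x \<in> X. \<pi> x = R}) else 0) = 1" .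
  qed
  also have "\<dots> = real (card E)" by simp
  finally have "(\<Sum>a\<in>X. W a) = real (card E)" .
  moreover have "(\<Sum>a'\<in>X. W a') = real (card X) * W a" using Weq[OF _ a] by simp
  ultimately show ?thesis unfolding W_def using finX Xne by (simp add: field_simps)
qed

lemma sym_sum:
  fixes E :: "(nat \<Rightarrow> role) set" and X :: "nat set" and f :: "nat \<Rightarrow> real"
  assumes finE: "finite E" and finX: "finite X" and Xne: "X \<noteq> {}"
    and inv: "\<And>\<pi> a a'. \<pi> \<in> E \<Longrightarrow> a \<in> X \<Longrightarrow> a' \<in> X \<Longrightarrow> \<pi> \<circ> sw a a' \<in> E"
    and kpos: "\<And>\<pi>. \<pi> \<in> E \<Longrightarrow> 0 < card {x \<in> X. \<pi> x = R}"
  shows "(\<Sum>\<pi>\<in>E. (\<Sum>a\<in>{x \<in> X. \<pi> x = R}. f a) / real (card {x \<in> X. \<pi> x = R}))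
       = real (card E) / real (card X) * (\<Sum>a\<in>X. f a)"
proof -
  have "(\<Sum>\<pi>\<in>E. (\<Sum>a\<in>{x \<in> X. \<pi> x = R}. f a) / real (card {x \<in> X. \<pi> x = R}))
      = (\<Sum>\<pi>\<in>E. \<Sum>a\<in>X. f a * (if \<pi> a = R then 1 / real (card {x \<in> X. \<pi> x = R}) else 0))"
  proof (rule sum.cong[OF refl])
    fix \<pi> assume "\<pi> \<in> E"
    have "(\<Sum>a\<in>{x \<in> X. \<pi> x = R}. f a) = (\<Sum>a\<in>X. if \<pi> a = R then f a else 0)"
      using sum.inter_filter[OF finX, of f "\<lambda>x. \<pi> x = R"] by simp
    hence "(\<Sum>a\<in>{x \<in> X. \<pi> x = R}. f a) / real (card {x \<in> X. \<pi> x = R})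
      = (\<Sum>a\<in>X. if \<pi> a = R then f a else 0) / real (card {x \<in> X. \<pi> x = R})" by simp
    also have "\<dots> = (\<Sum>a\<in>X. f a * (if \<pi> a = R then 1 / real (card {x \<in> X. \<pi> x = R}) else 0))"
      unfolding sum_divide_distrib by (intro sum.cong) auto
    finally show "(\<Sum>a\<in>{x \<in> X. \<pi> x = R}. f a) / real (card {x \<in> X. \<pi> x = R})
      = (\<Sum>a\<in>X. f a * (if \<pi> a = R then 1 / real (card {x \<in> X. \<pi> x = R}) else 0))" .
  qed
  also have "\<dots> = (\<Sum>a\<in>X. f a * (\<Sum>\<pi>\<in>E. if \<pi> a = R then 1 / real (card {x \<in> X. \<pi> x = R}) else 0))"
    by (subst sum.swap) (simp add: sum_distrib_left)
  also have "\<dots> = (\<Sum>a\<in>X. f a * (real (card E) / real (card X)))"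
    by (rule sum.cong[OF refl]) (simp add: sym_weight[OF assms])
  also have "\<dots> = real (card E) / real (card X) * (\<Sum>a\<in>X. f a)"
    by (simp add: sum_distrib_left sum_divide_distrib[symmetric] sum_distrib_right[symmetric] mult.commute)
  finally show ?thesis .
qed

lemma avg_le: "finite K \<Longrightarrow> K \<noteq> {} \<Longrightarrow> (\<And>i. i \<in> K \<Longrightarrow> f i \<le> (D::real)) \<Longrightarrow> (\<Sum>i\<in>K. f i) / real (card K) \<le> D"
proof -
  assume a: "finite K" "K \<noteq> {}" "\<And>i. i \<in> K \<Longrightarrow> f i \<le> D"
  have "(\<Sum>i\<in>K. f i) \<le> (\<Sum>i\<in>K. D)" using a by (intro sum_mono) auto
  thus ?thesis using a by (simp add: divide_le_eq card_gt_0_iff mult.commute)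
qed

lemma avg_ge: "finite K \<Longrightarrow> K \<noteq> {} \<Longrightarrow> (\<And>i. i \<in> K \<Longrightarrow> (D::real) \<le> f i) \<Longrightarrow> D \<le> (\<Sum>i\<in>K. f i) / real (card K)"
proof -
  assume a: "finite K" "K \<noteq> {}" "\<And>i. i \<in> K \<Longrightarrow> D \<le> f i"
  have "(\<Sum>i\<in>K. D) \<le> (\<Sum>i\<in>K. f i)" using a by (intro sum_mono) auto
  thus ?thesis using a by (simp add: le_divide_eq card_gt_0_iff mult.commute)
qed

lemma finite_role: "finite (UNIV :: role set)"
proof -
  have "UNIV = {BO, BN, SO, SN}" using role.exhaust by auto
  thus ?thesis by (metis finite.emptyI finite.insertI)
qed

lemma finite_assignments: "finite (assignments n m c)"
proof -
  have "assignments n m c \<subseteq> {1..m+n+2*c} \<rightarrow>\<^sub>E (UNIV :: role set)" unfolding assignments_def by auto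
  thus ?thesis using finite_role by (meson finite_PiE finite_atLeastAtMost finite_subset)
qed

lemma quantile_mono:
  assumes "real_distribution M" "0 < u" "u \<le> u'" "u' < 1"
  shows "quantile M u \<le> quantile M u'"
proof -
  interpret real_distribution M by fact
  have top: "((\<lambda>x. measure M {..x}) \<longlongrightarrow> 1) at_top" using cdf_lim_at_top_prob unfolding cdf_def .
  have bot: "((\<lambda>x. measure M {..x}) \<longlongrightarrow> 0) at_bot" using cdf_lim_at_bot unfolding cdf_def .
  have "eventually (\<lambda>x. u' < measure M {..x}) at_top" using top assms by (intro order_tendstoD) auto
  then obtain x1 where "u' < measure M {..x1}" by (metis eventually_at_top_linorder order.refl)
  hence ne: "{x. u' \<le> measure M {..x}} \<noteq> {}" by (metis empty_iff mem_Collect_eq less_imp_le)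
  have "eventually (\<lambda>x. measure M {..x} < u) at_bot" using bot assms by (intro order_tendstoD) auto
  then obtain x0 where x0: "\<And>x. x \<le> x0 \<Longrightarrow> measure M {..x} < u" by (metis eventually_at_bot_linorder)
  have "bdd_below {x. u \<le> measure M {..x}}"
  proof (rule bdd_belowI)
    fix x assume "x \<in> {x. u \<le> measure M {..x}}"
    thus "x0 \<le> x" using x0 by (metis linorder_le_cases mem_Collect_eq not_le)
  qed
  moreover have "{x. u' \<le> measure M {..x}} \<subseteq> {x. u \<le> measure M {..x}}" using assms by auto
  ultimately show ?thesis unfolding quantile_def using ne by (intro cInf_superset_mono) auto
qed


lemma agents_sw: assumes "a \<in> Y \<longleftrightarrow> a' \<in> Y" "a \<in> {1..N}" "a' \<in> {1..N}"
  shows "card (Y \<inter> agents N (\<pi> \<circ> sw a a') Rs) = card (Y \<inter> agents N \<pi> Rs)"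
proof -
  have e: "Y \<inter> agents N \<pi>' Rs = {k \<in> Y \<inter> {1..N}. \<pi>' k \<in> Rs}" for \<pi>'
    unfolding agents_def by auto
  have "a \<in> Y \<inter> {1..N} \<longleftrightarrow> a' \<in> Y \<inter> {1..N}" using assms by auto
  thus ?thesis unfolding e using card_sw[of a "Y \<inter> {1..N}" a' "\<lambda>k. \<pi> k \<in> Rs"] by simp
qed

lemma E1_inv:
  assumes pi: "\<pi> \<in> event_E1 n m c"
    and a: "a \<in> {1..m+n+2*c}" "a' \<in> {1..m+n+2*c}"
    and Y1: "a \<in> {1..pblk n} \<longleftrightarrow> a' \<in> {1..pblk n}"
    and Y2: "a \<in> {pblk n+1..2*pblk n} \<longleftrightarrow> a' \<in> {pblk n+1..2*pblk n}"
    and Y3: "a \<in> {m+n+2*c-pblk n+1..m+n+2*c} \<longleftrightarrow> a' \<in> {m+n+2*c-pblk n+1..m+n+2*c}"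
    and Y4: "a \<in> {m+n+2*c-2*pblk n+1..m+n+2*c-pblk n} \<longleftrightarrow> a' \<in> {m+n+2*c-2*pblk n+1..m+n+2*c-pblk n}"
  shows "\<pi> \<circ> sw a a' \<in> event_E1 n m c"
proof -
  let ?N = "m+n+2*c"
  have asg: "\<pi> \<in> assignments n m c" using pi unfolding event_E1_def Let_def by auto
  have ext: "\<pi> \<circ> sw a a' \<in> {1..?N} \<rightarrow>\<^sub>E (UNIV :: role set)"
  proof -
    have "\<pi> x = undefined" if "x \<notin> {1..?N}" for x
      using asg that unfolding assignments_def by (auto simp: PiE_def extensional_def)
    moreover have "sw a a' x = x" if "x \<notin> {1..?N}" for x using that a by (auto simp: sw_def)
    ultimately show ?thesis by (auto simp: PiE_def extensional_def)
  qed
  have cR: "card {i \<in> {1..?N}. (\<pi> \<circ> sw a a') i = R} = card {i \<in> {1..?N}. \<pi> i = R}" for R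
    using card_sw[of a "{1..?N}" a' "\<lambda>k. \<pi> k = R"] a by simp
  have "\<pi> \<circ> sw a a' \<in> assignments n m c" using asg ext cR[of BO] cR[of SO] cR[of BN] cR[of SN] unfolding assignments_def by simp
  moreover have "card (Y \<inter> agents ?N (\<pi> \<circ> sw a a') Rs) = card (Y \<inter> agents ?N \<pi> Rs)"
    if "a \<in> Y \<longleftrightarrow> a' \<in> Y" for Y Rs using agents_sw[OF that a] .
  ultimately show ?thesis using pi Y1 Y2 Y3 Y4 unfolding event_E1_def Let_def by auto
qed


theorem lemma3p1:
  fixes FB FS :: "real measure" and n m c :: nat and q :: "nat \<Rightarrow> real"
  defines "b \<equiv> quantile FB" and "s \<equiv> quantile FS"
      and "N \<equiv> m + n + 2*c" and "p \<equiv> pblk n"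
  assumes "real_distribution FB" and "real_distribution FS"
      and fosd: "\<forall>u \<in> {0<..<1}. s u \<le> b u"
      and "20 \<le> n" and "n \<le> m" and "1 \<le> c"
      and q_range: "\<forall>i \<in> {1..N}. 0 < q i \<and> q i < 1"
      and q_mono: "\<forall>i j. 1 \<le> i \<and> i \<le> j \<and> j \<le> N \<longrightarrow> q j \<le> q i"
  shows "(\<forall>\<pi> \<in> event_E1 n m c. OPT_gft b s N q \<pi> \<le> STR_gft b s N q \<pi>) \<and>
         (event_E1 n m c \<noteq> {} \<longrightarrow>
            (\<Sum>\<pi> \<in> event_E1 n m c. STR_gft b s N q \<pi> - OPT_gft b s N q \<pi>) / real (card (event_E1 n m c))
            \<ge> (\<Sum>i \<in> {1..p}. \<Sum>j \<in> {N-p+1..N}. b (q i) - s (q j)) / (real p * real p))"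
proof -
  have Nd: "N = m + n + 2*c" using \<open>N \<equiv> m + n + 2*c\<close> by simp
  have pd: "p = pblk n" using \<open>p \<equiv> pblk n\<close> by simp
  have n20: "20 \<le> n" and nm: "n \<le> m" by fact+
  have pb: "real n / 10 \<le> real p" "real p < real n / 10 + 1" using pblk_bounds[of n] pd by auto
  have p2: "2 \<le> p" using pb n20 by linarith
  have p3: "3 * p \<le> N" using pb n20 nm Nd by linarith
  have monb: "b (q j) \<le> b (q i)" if "1 \<le> i" "i \<le> j" "j \<le> N" for i j
  proof -
    have "0 < q j" "q j \<le> q i" "q i < 1" using q_range q_mono that by auto
    thus ?thesis unfolding \<open>b \<equiv> quantile FB\<close> using quantile_mono[OF \<open>real_distribution FB\<close>] by blast
  qed
  have mons: "s (q j) \<le> s (q i)" if "1 \<le> i" "i \<le> j" "j \<le> N" for i j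
  proof -
    have "0 < q j" "q j \<le> q i" "q i < 1" using q_range q_mono that by auto
    thus ?thesis unfolding \<open>s \<equiv> quantile FS\<close> using quantile_mono[OF \<open>real_distribution FS\<close>] by blast
  qed
  have dom: "s (q i) \<le> b (q i)" if "1 \<le> i" "i \<le> N" for i
    using fosd q_range that by auto
  define E where "E = event_E1 n m c"
  define D where "D \<pi> = STR_gft b s N q \<pi> - OPT_gft b s N q \<pi>" for \<pi>
  define K where "K \<pi> = {x \<in> {1..p}. \<pi> x = BN}" for \<pi> :: "nat \<Rightarrow> role"
  define L where "L \<pi> = {x \<in> {N-p+1..N}. \<pi> x = SN}" for \<pi> :: "nat \<Rightarrow> role"
  have A: "b (q i) - s (q j) \<le> D \<pi>" if "\<pi> \<in> E" "i \<in> K \<pi>" "j \<in> L \<pi>" for \<pi> i j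
    using partA[where b=b and s=s and q=q and N=N and m=m and n=n and c=c and p=p, OF Nd pd n20 nm monb mons dom, of \<pi> i j] that unfolding E_def K_def L_def D_def by auto
  have kK: "2 \<le> card (K \<pi>)" "2 \<le> card (L \<pi>)" if "\<pi> \<in> E" for \<pi>
  proof -
    have "{1..p} \<inter> agents N \<pi> {BN} = K \<pi>" "{N-p+1..N} \<inter> agents N \<pi> {SN} = L \<pi>"
      unfolding K_def L_def agents_def using p3 by auto
    thus "2 \<le> card (K \<pi>)" "2 \<le> card (L \<pi>)"
      using that unfolding E_def event_E1_def Let_def Nd[symmetric] pd[symmetric] by auto
  qed
  have finKL: "finite (K \<pi>)" "finite (L \<pi>)" for \<pi> unfolding K_def L_def by auto
  have neKL: "K \<pi> \<noteq> {}" "L \<pi> \<noteq> {}" if "\<pi> \<in> E" for \<pi> using kK[OF that] by auto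
  have part1: "\<forall>\<pi> \<in> E. OPT_gft b s N q \<pi> \<le> STR_gft b s N q \<pi>"
  proof
    fix \<pi> assume pi: "\<pi> \<in> E"
    obtain i where i: "i \<in> K \<pi>" using neKL[OF pi] by blast
    obtain j where j: "j \<in> L \<pi>" using neKL[OF pi] by blast
    have "s (q j) \<le> s (q i)" using i j p3 unfolding K_def L_def by (intro mons) auto
    also have "\<dots> \<le> b (q i)" using i p3 unfolding K_def by (intro dom) auto
    finally have "0 \<le> D \<pi>" using A[OF pi i j] by linarith
    thus "OPT_gft b s N q \<pi> \<le> STR_gft b s N q \<pi>" unfolding D_def by simp
  qed
  have avg: "(\<Sum>i\<in>K \<pi>. b (q i)) / real (card (K \<pi>)) - (\<Sum>j\<in>L \<pi>. s (q j)) / real (card (L \<pi>)) \<le> D \<pi>"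
    if pi: "\<pi> \<in> E" for \<pi>
  proof -
    have "(\<Sum>i\<in>K \<pi>. b (q i)) / real (card (K \<pi>)) - D \<pi> \<le> s (q j)" if j: "j \<in> L \<pi>" for j
    proof -
      have "(\<Sum>i\<in>K \<pi>. b (q i)) / real (card (K \<pi>)) \<le> D \<pi> + s (q j)"
        using finKL neKL[OF pi] A[OF pi _ j] by (intro avg_le) (auto simp: algebra_simps)
      thus ?thesis by linarith
    qed
    hence "(\<Sum>i\<in>K \<pi>. b (q i)) / real (card (K \<pi>)) - D \<pi> \<le> (\<Sum>j\<in>L \<pi>. s (q j)) / real (card (L \<pi>))"
      using finKL neKL[OF pi] by (intro avg_ge) auto
    thus ?thesis by linarith
  qed
  have part2: "(\<Sum>\<pi>\<in>E. D \<pi>) / real (card E)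
      \<ge> (\<Sum>i \<in> {1..p}. \<Sum>j \<in> {N-p+1..N}. b (q i) - s (q j)) / (real p * real p)" if Ene: "E \<noteq> {}"
  proof -
    have finE: "finite E" unfolding E_def event_E1_def Let_def
      using finite_assignments by (auto intro: finite_subset)
    have cE: "0 < real (card E)" using finE Ene by (simp add: card_gt_0_iff)
    have cI: "card {1..p} = p" by simp
    have cJ: "card {N-p+1..N} = p" using p3 by simp
    have inv1: "\<pi> \<circ> sw a a' \<in> E" if "\<pi> \<in> E" "a \<in> {1..p}" "a' \<in> {1..p}" for \<pi> a a'
      using that p3 unfolding E_def by (intro E1_inv) (auto simp: Nd pd)
    have inv2: "\<pi> \<circ> sw a a' \<in> E" if "\<pi> \<in> E" "a \<in> {N-p+1..N}" "a' \<in> {N-p+1..N}" for \<pi> a a'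
      using that p3 unfolding E_def by (intro E1_inv) (auto simp: Nd pd)
    have S1: "(\<Sum>\<pi>\<in>E. (\<Sum>i\<in>K \<pi>. b (q i)) / real (card (K \<pi>))) = real (card E) / real p * (\<Sum>i\<in>{1..p}. b (q i))"
      using sym_sum[where R=BN and f="\<lambda>i. b (q i)" and X="{1..p}", OF finE _ _ inv1] kK p2 unfolding K_def by fastforce
    have S2: "(\<Sum>\<pi>\<in>E. (\<Sum>j\<in>L \<pi>. s (q j)) / real (card (L \<pi>))) = real (card E) / real p * (\<Sum>j\<in>{N-p+1..N}. s (q j))"
      using sym_sum[where R=SN and f="\<lambda>j. s (q j)" and X="{N-p+1..N}", OF finE _ _ inv2] kK p2 p3 cJ unfolding L_def by fastforce
    have "(\<Sum>\<pi>\<in>E. (\<Sum>i\<in>K \<pi>. b (q i)) / real (card (K \<pi>)) - (\<Sum>j\<in>L \<pi>. s (q j)) / real (card (L \<pi>))) \<le> (\<Sum>\<pi>\<in>E. D \<pi>)"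
      using avg by (intro sum_mono) auto
    hence main: "real (card E) / real p * (\<Sum>i\<in>{1..p}. b (q i)) - real (card E) / real p * (\<Sum>j\<in>{N-p+1..N}. s (q j)) \<le> (\<Sum>\<pi>\<in>E. D \<pi>)"
      unfolding sum_subtractf S1 S2 .
    have dbl: "(\<Sum>i \<in> {1..p}. \<Sum>j \<in> {N-p+1..N}. b (q i) - s (q j))
        = real p * (\<Sum>i\<in>{1..p}. b (q i)) - real p * (\<Sum>j\<in>{N-p+1..N}. s (q j))"
      using p3 by (simp add: sum_subtractf cJ sum_distrib_left mult.commute of_nat_diff)
    have pp: "0 < real p" using p2 by simp
    have "(\<Sum>i \<in> {1..p}. \<Sum>j \<in> {N-p+1..N}. b (q i) - s (q j)) / (real p * real p)
        = (real (card E) / real p * (\<Sum>i\<in>{1..p}. b (q i)) - real (card E) / real p * (\<Sum>j\<in>{N-p+1..N}. s (q j))) / real (card E)"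
      unfolding dbl using pp cE by (simp add: field_simps)
    also have "\<dots> \<le> (\<Sum>\<pi>\<in>E. D \<pi>) / real (card E)" using main cE by (intro divide_right_mono) auto
    finally show ?thesis .
  qed
  show ?thesis using part1 part2 unfolding E_def D_def by auto
qed


end
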